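(* Let $p\ge1$, $m\in\mathbb{N}$, $a,b>0$, $\beta\in\mathbb{R}^p$, let $\xi_1,\ldots,\xi_r$ be designs on $\mathcal{X}$ and $q_1,\ldots,q_r\in[0,1]$ with $\sum_{i=1}^r q_i=1$, and let $\zeta$ be the population design assigning weight $q_i$ to $\xi_i$, with information matrix $M(\zeta;\beta)=\sum_{i=1}^r q_iM(\xi_i;\beta)$. Let $\xi=\sum_{i=1}^r q_i\xi_i$ (the mixture of the probability measures $\xi_i$) and let $\tilde\zeta$ be the population design assigning weight 1 to $\xi$, so $M(\tilde\zeta;\beta)=M(\xi;\beta)$. Then $M(\tilde\zeta;\beta)\ge M(\zeta;\beta)$ in the Loewner order. Consequently, for every isotonic criterion function $\Phi$ (i.e. $\Phi(M_1)\ge\Phi(M_2)$ whenever $M_1\ge M_2$ are positive semidefinite), $\Phi(M(\tilde\zeta;\beta))\ge\Phi(M(\zeta;\beta))$.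
   Context: Let $\mathcal{X}\subseteq\mathbb{R}^k$ be a design region and $f=(1,f_1,\ldots,f_{p-1})^T:\mathcal{X}\to\mathbb{R}^p$ a vector of regression functions whose first component is the constant 1. A design $\xi$ is a probability measure on $\mathcal{X}$ with finite support $x_1,\ldots,x_l$ and weights $w_1,\ldots,w_l\ge0$, $\sum_j w_j=1$. The Poisson information matrix is $M_{Po}(\xi;\beta)=\sum_{j=1}^l w_j\exp(f(x_j)^T\beta)f(x_j)f(x_j)^T$, and the Poisson–Gamma information matrix is $M(\xi;\beta)=\frac{a}{b}\Bigl(M_{Po}(\xi;\beta)-\frac{M_{Po}(\xi;\beta)e_1e_1^TM_{Po}(\xi;\beta)}{e_1^TM_{Po}(\xi;\beta)e_1+b/m}\Bigr)$, where $e_1$ is the first standard unit vector of $\mathbb{R}^p$. The Loewner order is $M_1\ge M_2$ iff $M_1-M_2$ is positive semidefinite. *)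

theory Defs
  imports "HOL-Analysis.Analysis"
begin

text \<open>Coordinates of R^p are indexed by a finite type 'p; a distinguished index i0
  plays the role of the first coordinate, e_1 = axis i0 1.\<close>

definition outer :: "real^'p \<Rightarrow> real^'p \<Rightarrow> real^'p^'p" where
  "outer u v = (\<chi> i j. u $ i * v $ j)"

definition supp_design :: "('a \<Rightarrow> real) \<Rightarrow> 'a set" where
  "supp_design w = {x. w x \<noteq> 0}"

definition is_design :: "'a set \<Rightarrow> ('a \<Rightarrow> real) \<Rightarrow> bool" where
  "is_design X w \<longleftrightarrow> (\<forall>x. 0 \<le> w x) \<and> finite (supp_design w) \<and> supp_design w \<subseteq> X
     \<and> (\<Sum>x\<in>supp_design w. w x) = 1"

definition M_Po :: "('a \<Rightarrow> real^'p) \<Rightarrow> real^'p \<Rightarrow> ('a \<Rightarrow> real) \<Rightarrow> real^'p^'p" where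
  "M_Po f \<beta> w = (\<Sum>x\<in>supp_design w. (w x * exp (f x \<bullet> \<beta>)) *\<^sub>R outer (f x) (f x))"

definition M_PG :: "real \<Rightarrow> real \<Rightarrow> nat \<Rightarrow> 'p \<Rightarrow> ('a \<Rightarrow> real^'p) \<Rightarrow> real^'p
     \<Rightarrow> ('a \<Rightarrow> real) \<Rightarrow> real^'p^'p" where
  "M_PG a b m i0 f \<beta> w =
     (let P = M_Po f \<beta> w; e = axis i0 (1::real)
      in (a / b) *\<^sub>R (P - (1 / (e \<bullet> (P *v e) + b / real m)) *\<^sub>R (P ** outer e e ** P)))"

definition psd :: "real^'p^'p \<Rightarrow> bool" where
  "psd A \<longleftrightarrow> transpose A = A \<and> (\<forall>x. 0 \<le> x \<bullet> (A *v x))"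

definition loewner_ge :: "real^'p^'p \<Rightarrow> real^'p^'p \<Rightarrow> bool" where
  "loewner_ge A B \<longleftrightarrow> psd (A - B)"

definition isotonic :: "(real^'p^'p \<Rightarrow> real) \<Rightarrow> bool" where
  "isotonic \<Phi> \<longleftrightarrow> (\<forall>M1 M2. psd M1 \<and> psd M2 \<and> loewner_ge M1 M2 \<longrightarrow> \<Phi> M2 \<le> \<Phi> M1)"

end

theory Submission
  imports Defs
begin

lemma transpose_add': "transpose (A + B) = transpose A + transpose (B::real^'n^'n)"
  by (simp add: transpose_def vec_eq_iff)
lemma transpose_diff': "transpose (A - B) = transpose A - transpose (B::real^'n^'n)"
  by (simp add: transpose_def vec_eq_iff)
lemma transpose_sum': "transpose (sum (A::_\<Rightarrow>real^'n^'n) I) = (\<Sum>i\<in>I. transpose (A i))"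
  by (induction I rule: infinite_finite_induct) (auto simp: transpose_add' transpose_def vec_eq_iff)
lemma transpose_outer: "transpose (outer u u) = outer u u"
  by (simp add: transpose_def outer_def vec_eq_iff mult.commute)
lemma outer_mv: "outer u v *v z = (v \<bullet> z) *\<^sub>R u"
  by (simp add: outer_def matrix_vector_mult_def vec_eq_iff inner_vec_def sum_distrib_left mult_ac)
lemma sum_mv: "(sum (A::_\<Rightarrow>real^'n^'m) I) *v x = (\<Sum>i\<in>I. A i *v x)"
  by (induction I rule: infinite_finite_induct) (auto simp: matrix_vector_mult_add_rdistrib)
lemma smult_mv: "(c *\<^sub>R (A::real^'n^'m)) *v x = c *\<^sub>R (A *v x)"
  by (simp add: matrix_vector_mult_def vec_eq_iff sum_distrib_left mult_ac)
lemma diff_mv: "((A::real^'n^'m) - B) *v x = A *v x - B *v x"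
  by (simp add: matrix_vector_mult_def vec_eq_iff sum_subtractf left_diff_distrib)

lemma M_Po_over:
  assumes "finite S" "supp_design w \<subseteq> S"
  shows "M_Po f \<beta> w = (\<Sum>x\<in>S. (w x * exp (f x \<bullet> \<beta>)) *\<^sub>R outer (f x) (f x))"
  unfolding M_Po_def
  by (rule sum.mono_neutral_left) (use assms in \<open>auto simp: supp_design_def\<close>)

lemma qf_Po:
  assumes "finite S" "supp_design w \<subseteq> S"
  shows "y \<bullet> (M_Po f \<beta> w *v z) = (\<Sum>s\<in>S. w s * exp (f s \<bullet> \<beta>) * ((f s \<bullet> y) * (f s \<bullet> z)))"
  unfolding M_Po_over[OF assms] sum_mv smult_mv outer_mv inner_sum_right
  by (simp add: mult_ac inner_commute)

lemma transpose_Po: "transpose (M_Po f \<beta> w) = M_Po f \<beta> w"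
  unfolding M_Po_def transpose_sum' transpose_scalar transpose_outer ..

lemma qf_PG:
  "x \<bullet> (M_PG a b m i0 f \<beta> w *v x) =
   (a / b) * (x \<bullet> (M_Po f \<beta> w *v x) - (axis i0 1 \<bullet> (M_Po f \<beta> w *v x)) * (x \<bullet> (M_Po f \<beta> w *v axis i0 1))
      / (axis i0 1 \<bullet> (M_Po f \<beta> w *v axis i0 1) + b / real m))"
  unfolding M_PG_def Let_def smult_mv diff_mv matrix_vector_mul_assoc[symmetric] outer_mv
     matrix_vector_mult_scaleR inner_diff_right inner_scaleR_right
  by simp

lemma transpose_PG: "transpose (M_PG a b m i0 f \<beta> w) = M_PG a b m i0 f \<beta> w"
  unfolding M_PG_def Let_def transpose_scalar transpose_diff' matrix_transpose_mul transpose_Po transpose_outer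
  by (simp add: matrix_mul_assoc)

lemma cs_trick:
  fixes \<alpha> u v :: "'a \<Rightarrow> real"
  assumes "\<And>s. 0 \<le> \<alpha> s"
  shows "2*t*(\<Sum>s\<in>S. \<alpha> s * (u s * v s)) - t^2 * (\<Sum>s\<in>S. \<alpha> s * (v s * v s)) \<le> (\<Sum>s\<in>S. \<alpha> s * (u s * u s))"
proof -
  have "0 \<le> (\<Sum>s\<in>S. \<alpha> s * (u s - t * v s)^2)"
    by (intro sum_nonneg mult_nonneg_nonneg assms) auto
  also have "\<dots> = (\<Sum>s\<in>S. \<alpha> s * (u s * u s)) - 2*t*(\<Sum>s\<in>S. \<alpha> s * (u s * v s)) + t^2 * (\<Sum>s\<in>S. \<alpha> s * (v s * v s))"
    by (simp add: sum_distrib_left sum.distrib[symmetric] sum_subtractf[symmetric] algebra_simps power2_eq_square)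
  finally show ?thesis by linarith
qed

lemma cs_final:
  fixes U V E X :: real
  assumes "0 < V" "E \<le> V" "\<And>t. 2*t*U - t^2 * E \<le> X"
  shows "U^2 / V \<le> X"
proof -
  have "2*(U/V)*U - (U/V)^2 * E \<le> X" by (rule assms(3))
  moreover have "(U/V)^2 * E \<le> (U/V)^2 * V" using assms(2) by (simp add: mult_left_mono)
  moreover have "2*(U/V)*U - (U/V)^2 * V = U^2/V" using assms(1) by (simp add: field_simps power2_eq_square)
  ultimately show ?thesis by linarith
qed

lemma titu:
  fixes q u v :: "nat \<Rightarrow> real"
  assumes "\<And>i. i \<in> I \<Longrightarrow> 0 \<le> q i" "\<And>i. i \<in> I \<Longrightarrow> 0 < v i" "0 < (\<Sum>i\<in>I. q i * v i)"
  shows "(\<Sum>i\<in>I. q i * u i)^2 / (\<Sum>i\<in>I. q i * v i) \<le> (\<Sum>i\<in>I. q i * (u i ^ 2 / v i))"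
proof (rule cs_final[OF assms(3) order_refl])
  fix t :: real
  have "q i * (2*t*u i - t^2 * v i) \<le> q i * (u i ^ 2 / v i)" if "i \<in> I" for i
  proof (rule mult_left_mono[OF _ assms(1)[OF that]])
    have v: "0 < v i" using assms(2) that .
    have "u i ^ 2 / v i - (2*t*u i - t^2 * v i) = (u i - t * v i)^2 / v i"
      using v by (simp add: field_simps power2_eq_square)
    moreover have "0 \<le> (u i - t * v i)^2 / v i" using v by simp
    ultimately show "2*t*u i - t^2 * v i \<le> u i ^ 2 / v i" by linarith
  qed
  then have "(\<Sum>i\<in>I. q i * (2*t*u i - t^2 * v i)) \<le> (\<Sum>i\<in>I. q i * (u i ^ 2 / v i))"
    by (rule sum_mono)
  moreover have "(\<Sum>i\<in>I. q i * (2*t*u i - t^2 * v i)) = 2*t*(\<Sum>i\<in>I. q i * u i) - t^2 * (\<Sum>i\<in>I. q i * v i)"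
    by (simp add: sum_distrib_left sum_subtractf algebra_simps)
  ultimately show "2*t*(\<Sum>i\<in>I. q i * u i) - t^2 * (\<Sum>i\<in>I. q i * v i) \<le> (\<Sum>i\<in>I. q i * (u i ^ 2 / v i))"
    by linarith
qed

theorem corollary1:
  fixes X :: "(real^'k) set" and f :: "real^'k \<Rightarrow> real^'p" and i0 :: 'p
    and a b :: real and m :: nat and \<beta> :: "real^'p"
    and r :: nat and \<xi> :: "nat \<Rightarrow> real^'k \<Rightarrow> real" and q :: "nat \<Rightarrow> real"
  assumes f_first: "\<forall>x\<in>X. f x $ i0 = 1"
    and m_pos: "0 < m" and a_pos: "0 < a" and b_pos: "0 < b"
    and designs: "\<forall>i<r. is_design X (\<xi> i)"
    and q_range: "\<forall>i<r. 0 \<le> q i \<and> q i \<le> 1"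
    and q_sum: "(\<Sum>i<r. q i) = 1"
  shows "loewner_ge (M_PG a b m i0 f \<beta> (\<lambda>x. \<Sum>i<r. q i * \<xi> i x))
                    (\<Sum>i<r. q i *\<^sub>R M_PG a b m i0 f \<beta> (\<xi> i))
       \<and> (\<forall>\<Phi>. isotonic \<Phi> \<longrightarrow>
            \<Phi> (\<Sum>i<r. q i *\<^sub>R M_PG a b m i0 f \<beta> (\<xi> i))
              \<le> \<Phi> (M_PG a b m i0 f \<beta> (\<lambda>x. \<Sum>i<r. q i * \<xi> i x)))"
proof -
  define c where "c = b / real m"
  define e where "e = (axis i0 (1::real) :: real^'p)"
  define W where "W = (\<lambda>x. \<Sum>i<r. q i * \<xi> i x)"
  define S where "S = (\<Union>i<r. supp_design (\<xi> i))"
  have c_pos: "0 < c" using b_pos m_pos by (simp add: c_def)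
  have finS: "finite S" using designs by (auto simp: S_def is_design_def)
  have suppi: "supp_design (\<xi> i) \<subseteq> S" if "i < r" for i using that by (auto simp: S_def)
  have suppW: "supp_design W \<subseteq> S"
  proof
    fix x assume "x \<in> supp_design W"
    then have "(\<Sum>i<r. q i * \<xi> i x) \<noteq> 0" by (simp add: supp_design_def W_def)
    then obtain i where "i < r" "q i * \<xi> i x \<noteq> 0" by (meson lessThan_iff sum.neutral)
    then show "x \<in> S" by (auto simp: S_def supp_design_def)
  qed
  have nni: "0 \<le> \<xi> i s" if "i < r" for i s using designs that by (auto simp: is_design_def)
  have nni': "\<forall>s. 0 \<le> \<xi> i s" if "i < r" for i using nni that by blast
  have nnW: "\<forall>s. 0 \<le> W s" unfolding W_def using q_range nni by (auto intro!: sum_nonneg)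
  define Q where "Q w x y = (\<Sum>s\<in>S. w s * exp (f s \<bullet> \<beta>) * ((f s \<bullet> x) * (f s \<bullet> y)))"
    for w :: "real^'k \<Rightarrow> real" and x y :: "real^'p"
  have Qsym: "Q w x y = Q w y x" for w x y by (simp add: Q_def mult.commute)
  have QW: "Q W x y = (\<Sum>i<r. q i * Q (\<xi> i) x y)" for x y
    unfolding Q_def W_def sum_distrib_left sum_distrib_right
    by (subst sum.swap) (simp add: mult_ac)
  have PGform: "x \<bullet> (M_PG a b m i0 f \<beta> w *v x) = (a/b) * (Q w x x - (Q w x e)^2/(Q w e e + c))"
    if "supp_design w \<subseteq> S" for w x
    unfolding qf_PG qf_Po[OF finS that] e_def[symmetric] c_def[symmetric]
    using Qsym[of w e x] by (simp add: Q_def power2_eq_square)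
  have Qee: "0 \<le> Q w e e" if "\<forall>s. 0 \<le> w s" for w
    unfolding Q_def using that by (auto intro!: sum_nonneg)
  have PGnn: "0 \<le> Q w x x - (Q w x e)^2/(Q w e e + c)" if "\<forall>s. 0 \<le> w s" for w x
  proof -
    have "(Q w x e)^2/(Q w e e + c) \<le> Q w x x"
    proof (rule cs_final)
      have "0 \<le> Q w e e" by (rule Qee) (rule that)
      then show "0 < Q w e e + c" using c_pos by linarith
      show "Q w e e \<le> Q w e e + c" using c_pos by linarith
      fix t
      show "2 * t * Q w x e - t\<^sup>2 * Q w e e \<le> Q w x x"
        unfolding Q_def
        by (rule cs_trick[where \<alpha>="\<lambda>s. w s * exp (f s \<bullet> \<beta>)"]) (use that in simp)
    qed
    then show ?thesis by linarith
  qed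
  have ab: "0 < a / b" using a_pos b_pos by simp
  have psd_PG: "psd (M_PG a b m i0 f \<beta> w)" if "supp_design w \<subseteq> S" "\<forall>s. 0 \<le> w s" for w
    unfolding psd_def transpose_PG PGform[OF that(1)]
  proof (intro conjI allI refl)
    fix x
    have "0 \<le> Q w x x - (Q w x e)^2/(Q w e e + c)" using PGnn[OF that(2)] .
    then show "0 \<le> (a/b) * (Q w x x - (Q w x e)^2/(Q w e e + c))" using ab by (metis mult_nonneg_nonneg less_imp_le)
  qed
  have PGW: "psd (M_PG a b m i0 f \<beta> W)" using psd_PG[OF suppW nnW] .
  have tr_sum: "transpose (\<Sum>i<r. q i *\<^sub>R M_PG a b m i0 f \<beta> (\<xi> i)) = (\<Sum>i<r. q i *\<^sub>R M_PG a b m i0 f \<beta> (\<xi> i))"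
    unfolding transpose_sum' transpose_scalar transpose_PG ..
  have qf_sum: "x \<bullet> ((\<Sum>i<r. q i *\<^sub>R M_PG a b m i0 f \<beta> (\<xi> i)) *v x) =
     (\<Sum>i<r. q i * ((a/b) * (Q (\<xi> i) x x - (Q (\<xi> i) x e)^2/(Q (\<xi> i) e e + c))))" for x
    unfolding sum_mv smult_mv inner_sum_right inner_scaleR_right
    by (rule sum.cong) (auto simp: PGform suppi)
  have psd_sum: "psd (\<Sum>i<r. q i *\<^sub>R M_PG a b m i0 f \<beta> (\<xi> i))"
    unfolding psd_def tr_sum qf_sum
  proof (intro conjI allI refl sum_nonneg)
    fix x i assume "i \<in> {..<r}"
    then have "0 \<le> Q (\<xi> i) x x - (Q (\<xi> i) x e)^2/(Q (\<xi> i) e e + c)" "0 \<le> q i"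
      using PGnn nni' q_range by auto
    then show "0 \<le> q i * ((a/b) * (Q (\<xi> i) x x - (Q (\<xi> i) x e)^2/(Q (\<xi> i) e e + c)))"
      using ab by (metis mult_nonneg_nonneg less_imp_le)
  qed
  have lg: "loewner_ge (M_PG a b m i0 f \<beta> W) (\<Sum>i<r. q i *\<^sub>R M_PG a b m i0 f \<beta> (\<xi> i))"
    unfolding loewner_ge_def psd_def
  proof (intro conjI allI)
    show "transpose (M_PG a b m i0 f \<beta> W - (\<Sum>i<r. q i *\<^sub>R M_PG a b m i0 f \<beta> (\<xi> i))) =
      M_PG a b m i0 f \<beta> W - (\<Sum>i<r. q i *\<^sub>R M_PG a b m i0 f \<beta> (\<xi> i))"
      unfolding transpose_diff' tr_sum transpose_PG ..
    fix x
    define U where "U i = Q (\<xi> i) x e" for i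
    define V where "V i = Q (\<xi> i) e e + c" for i
    have Vpos: "0 < V i" if "i < r" for i using Qee[of "\<xi> i"] nni'[OF that] c_pos by (simp add: V_def) 
    have sumV: "(\<Sum>i<r. q i * V i) = Q W e e + c"
      unfolding V_def QW using q_sum by (simp add: distrib_left sum.distrib sum_distrib_right[symmetric])
    have VWpos: "0 < Q W e e + c" using Qee[OF nnW] c_pos by linarith
    have sumU: "(\<Sum>i<r. q i * U i) = Q W x e" unfolding U_def QW ..
    have T: "(Q W x e)^2 / (Q W e e + c) \<le> (\<Sum>i<r. q i * (U i ^ 2 / V i))"
      using titu[of "{..<r}" q V U] q_range Vpos sumV sumU VWpos by auto
    have "x \<bullet> ((M_PG a b m i0 f \<beta> W - (\<Sum>i<r. q i *\<^sub>R M_PG a b m i0 f \<beta> (\<xi> i))) *v x)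
      = (a/b) * (Q W x x - (Q W x e)^2/(Q W e e + c))
        - (\<Sum>i<r. q i * ((a/b) * (Q (\<xi> i) x x - U i ^2 / V i)))"
      unfolding diff_mv inner_diff_right qf_sum PGform[OF suppW] U_def V_def ..
    also have "\<dots> = (a/b) * ((\<Sum>i<r. q i * (U i ^ 2 / V i)) - (Q W x e)^2/(Q W e e + c))"
      unfolding QW[of x x] by (simp add: algebra_simps sum_distrib_left sum_subtractf)
    also have "\<dots> \<ge> 0"
    proof -
      have "0 \<le> (\<Sum>i<r. q i * (U i ^ 2 / V i)) - (Q W x e)^2/(Q W e e + c)" using T by linarith
      then show ?thesis using ab by (metis mult_nonneg_nonneg less_imp_le)
    qed
    finally show "0 \<le> x \<bullet> ((M_PG a b m i0 f \<beta> W - (\<Sum>i<r. q i *\<^sub>R M_PG a b m i0 f \<beta> (\<xi> i))) *v x)" .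
  qed
  show ?thesis
  proof (intro conjI allI impI)
    show "loewner_ge (M_PG a b m i0 f \<beta> (\<lambda>x. \<Sum>i<r. q i * \<xi> i x)) (\<Sum>i<r. q i *\<^sub>R M_PG a b m i0 f \<beta> (\<xi> i))"
      using lg unfolding W_def .
    fix \<Phi> :: "real^'p^'p \<Rightarrow> real" assume "isotonic \<Phi>"
    then show "\<Phi> (\<Sum>i<r. q i *\<^sub>R M_PG a b m i0 f \<beta> (\<xi> i)) \<le> \<Phi> (M_PG a b m i0 f \<beta> (\<lambda>x. \<Sum>i<r. q i * \<xi> i x))"
      using lg PGW psd_sum unfolding isotonic_def W_def by blast
  qed
qed

end
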